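(* In the setting of the context, suppose every subcontroller is $u_i=\hat K_iR_i\begin{bmatrix} y_i\\ v_i\end{bmatrix}$ with $R_i=\begin{bmatrix} I&-G_{y_iv_i}\end{bmatrix}$ and $\hat K_i$ a stabilizing controller for $G_{y_iu_i}$, and let $\boldsymbol L$ be an interaction for which $\boldsymbol G_{\rm pre}$ is internally stable. Let $\delta\ge0$ satisfy $\|\boldsymbol G_{\boldsymbol{zv}}(I-\boldsymbol L\boldsymbol G_{\boldsymbol{wv}})^{-1}\boldsymbol L\|_\infty\le\delta$. If for each $i$ $$\|\hat M_{z_id_i}(\hat K_i)\|_\infty\le\alpha_i,\qquad \|\hat M_{w_id_i}(\hat K_i)\|_\infty\le\beta_i,$$ then the closed-loop map $\boldsymbol T_{\boldsymbol{zd}}:\boldsymbol d\mapsto\boldsymbol z$ of the entire network system satisfies $$\|\boldsymbol T_{\boldsymbol{zd}}\|_\infty\le\max_i\alpha_i+\delta\max_i\beta_i.$$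
   Context: For $i=1,\dots,N$, subsystem $G_i$ is a proper real rational transfer matrix with inputs $(v_i,d_i,u_i)$ (interaction, disturbance, control) and outputs $(w_i,z_i,y_i)$ (interaction, evaluation, measurement), $G_{a_ib_i}$ the block from $b_i$ to $a_i$; $v_i$ is measurable. Stacked signals $\boldsymbol v=\mathrm{col}(v_1,\dots,v_N)$ etc.; interaction $\boldsymbol v=\boldsymbol L\boldsymbol w$, $\boldsymbol L$ proper real rational. $\boldsymbol G_{\boldsymbol{wv}}:=\mathrm{diag}(G_{w_iv_i})$, $\boldsymbol G_{\boldsymbol{zv}}:=\mathrm{diag}(G_{z_iv_i})$. The preexisting system $\boldsymbol G_{\rm pre}$ is the loop $\boldsymbol w=\boldsymbol G_{\boldsymbol{wv}}\boldsymbol v$, $\boldsymbol v=\boldsymbol L\boldsymbol w$. All feedback systems are well-posed. $\hat M_{z_id_i}(\hat K_i):=G_{z_id_i}+G_{z_iu_i}\hat K_i(I-G_{y_iu_i}\hat K_i)^{-1}G_{y_id_i}$, $\hat M_{w_id_i}(\hat K_i):=G_{w_id_i}+G_{w_iu_i}\hat K_i(I-G_{y_iu_i}\hat K_i)^{-1}G_{y_id_i}$. $\hat K_i$ is a stabilizing controller for $G_{y_iu_i}$ if the positive feedback loop $y_i=G_{y_iu_i}u_i$, $u_i=\hat K_iy_i$ is internally stable. $\|\cdot\|_\infty$ is the $\mathcal H_\infty$-norm. *)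

theory Defs
  imports "HOL-Analysis.Analysis" "HOL-Computational_Algebra.Fraction_Field"
          "HOL-Computational_Algebra.Polynomial"
          "Jordan_Normal_Form.Gauss_Jordan_Elimination"
begin

text \<open>A real rational transfer function is an element of the field of fractions
  of real polynomials (in the Laplace variable s).\<close>
type_synonym tf = "real poly fract"

definition cpoly :: "real poly \<Rightarrow> complex \<Rightarrow> complex" where
  "cpoly p s = poly (map_poly complex_of_real p) s"

definition is_pole_tf :: "tf \<Rightarrow> complex \<Rightarrow> bool" where
  "is_pole_tf x s \<longleftrightarrow> (\<forall>p q. q \<noteq> 0 \<and> x = Fract p q \<longrightarrow> cpoly q s = 0)"

text \<open>Value of x at a non-pole s (independent of the chosen representation).\<close>
definition eval_tf :: "tf \<Rightarrow> complex \<Rightarrow> complex" where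
  "eval_tf x s = (SOME v. \<exists>p q. q \<noteq> 0 \<and> x = Fract p q \<and> cpoly q s \<noteq> 0 \<and> v = cpoly p s / cpoly q s)"

definition proper_tf :: "tf \<Rightarrow> bool" where
  "proper_tf x \<longleftrightarrow> (\<exists>p q. q \<noteq> 0 \<and> x = Fract p q \<and> degree p \<le> degree q)"

definition stable_tf :: "tf \<Rightarrow> bool" where
  "stable_tf x \<longleftrightarrow> proper_tf x \<and> (\<forall>s. Re s \<ge> 0 \<longrightarrow> \<not> is_pole_tf x s)"

definition proper_mat :: "tf mat \<Rightarrow> bool" where
  "proper_mat A \<longleftrightarrow> (\<forall>i<dim_row A. \<forall>j<dim_col A. proper_tf (A $$ (i,j)))"

definition stable_mat :: "tf mat \<Rightarrow> bool" where
  "stable_mat A \<longleftrightarrow> (\<forall>i<dim_row A. \<forall>j<dim_col A. stable_tf (A $$ (i,j)))"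

definition eval_mat :: "tf mat \<Rightarrow> complex \<Rightarrow> complex mat" where
  "eval_mat A s = mat (dim_row A) (dim_col A) (\<lambda>(i,j). eval_tf (A $$ (i,j)) s)"

definition vnorm :: "complex vec \<Rightarrow> real" where
  "vnorm x = sqrt (\<Sum>i<dim_vec x. (cmod (x $ i))\<^sup>2)"

definition opnorm :: "complex mat \<Rightarrow> real" where
  "opnorm A = Sup {vnorm (A *\<^sub>v x) | x. x \<in> carrier_vec (dim_col A) \<and> vnorm x \<le> 1}"

definition hinf_norm :: "tf mat \<Rightarrow> ereal" where
  "hinf_norm A = (if stable_mat A
      then (SUP \<omega>::real. ereal (opnorm (eval_mat A (\<i> * complex_of_real \<omega>)))) else \<infinity>)"

definition minv :: "tf mat \<Rightarrow> tf mat" where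
  "minv A = the (mat_inverse A)"

text \<open>Positive feedback loop y = P u, u = K y with P of size ny x nu and K of size nu x ny. Internally stable: the map from injected
  signals (e1,e2) to (y,u) for y = P u + e1, u = K y + e2 is in RH-infinity.\<close>
definition loop_mat :: "tf mat \<Rightarrow> tf mat \<Rightarrow> tf mat" where
  "loop_mat P K = four_block_mat (1\<^sub>m (dim_row P)) (- P) (- K) (1\<^sub>m (dim_row K))"

definition well_posed_fb :: "tf mat \<Rightarrow> tf mat \<Rightarrow> bool" where
  "well_posed_fb P K \<longleftrightarrow> invertible_mat (loop_mat P K)"

definition internally_stable_fb :: "tf mat \<Rightarrow> tf mat \<Rightarrow> bool" where
  "internally_stable_fb P K \<longleftrightarrow> well_posed_fb P K \<and> stable_mat (minv (loop_mat P K))"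

definition stabilizing :: "tf mat \<Rightarrow> tf mat \<Rightarrow> bool" where
  "stabilizing K P \<longleftrightarrow> internally_stable_fb P K"

fun diag_blocks :: "(nat \<Rightarrow> tf mat) \<Rightarrow> nat \<Rightarrow> tf mat" where
  "diag_blocks F 0 = 0\<^sub>m 0 0"
| "diag_blocks F (Suc n) = four_block_mat (diag_blocks F n)
      (0\<^sub>m (dim_row (diag_blocks F n)) (dim_col (F n)))
      (0\<^sub>m (dim_row (F n)) (dim_col (diag_blocks F n))) (F n)"

fun stack_rows :: "nat \<Rightarrow> (nat \<Rightarrow> tf mat) \<Rightarrow> nat \<Rightarrow> tf mat" where
  "stack_rows c F 0 = 0\<^sub>m 0 c"
| "stack_rows c F (Suc n) = stack_rows c F n @\<^sub>r F n"

definition append_cols :: "tf mat \<Rightarrow> tf mat \<Rightarrow> tf mat" where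
  "append_cols A B = four_block_mat A B (0\<^sub>m 0 (dim_col A)) (0\<^sub>m 0 (dim_col B))"

definition offset :: "(nat \<Rightarrow> nat) \<Rightarrow> nat \<Rightarrow> nat" where
  "offset n i = (\<Sum>j<i. n j)"

text \<open>The block of rows of the identity of size offset nd N belonging to d_i,
  i.e. the transfer matrix from the stacked disturbance d to d_i.\<close>
definition d_block :: "(nat \<Rightarrow> nat) \<Rightarrow> nat \<Rightarrow> nat \<Rightarrow> tf mat" where
  "d_block nd N i = mat (nd i) (offset nd N) (\<lambda>(r,c). if c = offset nd i + r then 1 else 0)"

definition Mhat :: "tf mat \<Rightarrow> tf mat \<Rightarrow> tf mat \<Rightarrow> tf mat \<Rightarrow> tf mat \<Rightarrow> tf mat" where
  "Mhat Gad Gau Gyu Gyd K =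
     Gad + Gau * K * minv (1\<^sub>m (dim_row Gyu) - Gyu * K) * Gyd"

definition Rmat :: "tf mat \<Rightarrow> tf mat" where
  "Rmat Gyv = append_cols (1\<^sub>m (dim_row Gyv)) (- Gyv)"

text \<open>Signals are represented by their transfer matrices from the stacked disturbance d
  (which has offset nd N components).\<close>
definition network_solution ::
  "nat \<Rightarrow> (nat \<Rightarrow> nat) \<Rightarrow> (nat \<Rightarrow> nat) \<Rightarrow> (nat \<Rightarrow> nat) \<Rightarrow> (nat \<Rightarrow> nat) \<Rightarrow> (nat \<Rightarrow> nat) \<Rightarrow> (nat \<Rightarrow> nat) \<Rightarrow>
   (nat \<Rightarrow> tf mat) \<Rightarrow> (nat \<Rightarrow> tf mat) \<Rightarrow> (nat \<Rightarrow> tf mat) \<Rightarrow>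
   (nat \<Rightarrow> tf mat) \<Rightarrow> (nat \<Rightarrow> tf mat) \<Rightarrow> (nat \<Rightarrow> tf mat) \<Rightarrow>
   (nat \<Rightarrow> tf mat) \<Rightarrow> (nat \<Rightarrow> tf mat) \<Rightarrow> (nat \<Rightarrow> tf mat) \<Rightarrow>
   (nat \<Rightarrow> tf mat) \<Rightarrow> tf mat \<Rightarrow>
   (nat \<Rightarrow> tf mat) \<Rightarrow> (nat \<Rightarrow> tf mat) \<Rightarrow> (nat \<Rightarrow> tf mat) \<Rightarrow> (nat \<Rightarrow> tf mat) \<Rightarrow> (nat \<Rightarrow> tf mat) \<Rightarrow> bool" where
  "network_solution N nv nd nu nw nz ny
     Gwv Gwd Gwu Gzv Gzd Gzu Gyv Gyd Gyu K L V W Z Y U \<longleftrightarrow>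
    (let c = offset nd N in
     (\<forall>i<N. V i \<in> carrier_mat (nv i) c \<and> W i \<in> carrier_mat (nw i) c \<and>
            Z i \<in> carrier_mat (nz i) c \<and> Y i \<in> carrier_mat (ny i) c \<and>
            U i \<in> carrier_mat (nu i) c \<and>
            W i = Gwv i * V i + Gwd i * d_block nd N i + Gwu i * U i \<and>
            Z i = Gzv i * V i + Gzd i * d_block nd N i + Gzu i * U i \<and>
            Y i = Gyv i * V i + Gyd i * d_block nd N i + Gyu i * U i \<and>
            U i = K i * Rmat (Gyv i) * (Y i @\<^sub>r V i)) \<and>
     stack_rows c V N = L * stack_rows c W N)"

definition network_well_posed where
  "network_well_posed N nv nd nu nw nz ny Gwv Gwd Gwu Gzv Gzd Gzu Gyv Gyd Gyu K L \<longleftrightarrow>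
    (\<exists>V W Z Y U. network_solution N nv nd nu nw nz ny
        Gwv Gwd Gwu Gzv Gzd Gzu Gyv Gyd Gyu K L V W Z Y U) \<and>
    (\<forall>V W Z Y U V' W' Z' Y' U'.
      network_solution N nv nd nu nw nz ny Gwv Gwd Gwu Gzv Gzd Gzu Gyv Gyd Gyu K L V W Z Y U \<and>
      network_solution N nv nd nu nw nz ny Gwv Gwd Gwu Gzv Gzd Gzu Gyv Gyd Gyu K L V' W' Z' Y' U'
      \<longrightarrow> (\<forall>i<N. V i = V' i \<and> W i = W' i \<and> Z i = Z' i \<and> Y i = Y' i \<and> U i = U' i))"

end

theory Submission
  imports Defs "Jordan_Normal_Form.Determinant"
begin


lemma cpoly_pCons[simp]: "cpoly (pCons a p) s = complex_of_real a + s * cpoly p s"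
  unfolding cpoly_def by (simp add: map_poly_pCons)

lemma cpoly_0[simp]: "cpoly 0 s = 0" unfolding cpoly_def by simp

lemma cpoly_add[simp]: "cpoly (p + q) s = cpoly p s + cpoly q s"
proof (induct p arbitrary: q)
  case 0 then show ?case by simp
next
  case (pCons a p)
  obtain b r where q: "q = pCons b r" by (cases q)
  show ?case using pCons(2)[of r] by (simp add: q algebra_simps)
qed

lemma cpoly_smult[simp]: "cpoly (Polynomial.smult a p) s = complex_of_real a * cpoly p s"
  by (induct p) (auto simp: algebra_simps)

lemma cpoly_1[simp]: "cpoly 1 s = 1" unfolding cpoly_def by simp

lemma cpoly_mult[simp]: "cpoly (p * q) s = cpoly p s * cpoly q s"
  by (induct p) (auto simp: algebra_simps)

lemma cpoly_uminus[simp]: "cpoly (- p) s = - cpoly p s"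
proof -
  have "cpoly (- p) s + cpoly p s = 0" by (metis cpoly_add cpoly_0 add.left_inverse)
  then show ?thesis by (simp add: eq_neg_iff_add_eq_0)
qed



definition nonpole :: "tf \<Rightarrow> complex \<Rightarrow> bool" where
  "nonpole x s \<longleftrightarrow> (\<exists>p q. q \<noteq> 0 \<and> x = Fract p q \<and> cpoly q s \<noteq> 0)"

lemma nonpole_iff: "nonpole x s \<longleftrightarrow> \<not> is_pole_tf x s"
  unfolding nonpole_def is_pole_tf_def by blast

lemma nonpole_0[simp]: "nonpole 0 s"
  unfolding nonpole_def by (rule exI[of _ 0], rule exI[of _ 1], simp add: Zero_fract_def)

lemma nonpole_add: assumes "nonpole x s" "nonpole y s" shows "nonpole (x + y) s"
proof -
  from assms obtain p q p' q' where h: "q \<noteq> 0" "x = Fract p q" "cpoly q s \<noteq> 0"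
    "q' \<noteq> 0" "y = Fract p' q'" "cpoly q' s \<noteq> 0" unfolding nonpole_def by blast
  show ?thesis unfolding nonpole_def
    by (rule exI[of _ "p * q' + p' * q"], rule exI[of _ "q * q'"], insert h, simp)
qed

lemma nonpole_mult: assumes "nonpole x s" "nonpole y s" shows "nonpole (x * y) s"
proof -
  from assms obtain p q p' q' where h: "q \<noteq> 0" "x = Fract p q" "cpoly q s \<noteq> 0"
    "q' \<noteq> 0" "y = Fract p' q'" "cpoly q' s \<noteq> 0" unfolding nonpole_def by blast
  show ?thesis unfolding nonpole_def
    by (rule exI[of _ "p * p'"], rule exI[of _ "q * q'"], insert h, simp)
qed

lemma nonpole_sum: "(\<And>i. i \<in> A \<Longrightarrow> nonpole (f i) s) \<Longrightarrow> nonpole (sum f A) s"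
  by (induct A rule: infinite_finite_induct) (auto intro: nonpole_add)

lemma eval_tf_rep: assumes "q \<noteq> 0" "x = Fract p q" "cpoly q s \<noteq> 0"
  shows "eval_tf x s = cpoly p s / cpoly q s"
proof -
  let ?P = "\<lambda>v. \<exists>p q. q \<noteq> 0 \<and> x = Fract p q \<and> cpoly q s \<noteq> 0 \<and> v = cpoly p s / cpoly q s"
  have "?P (cpoly p s / cpoly q s)" using assms by blast
  then have "?P (eval_tf x s)" unfolding eval_tf_def by (rule someI)
  then obtain p' q' where h: "q' \<noteq> 0" "x = Fract p' q'" "cpoly q' s \<noteq> 0"
    "eval_tf x s = cpoly p' s / cpoly q' s" by blast
  from h(2) assms(2) have "Fract p q = Fract p' q'" by simp
  then have "p * q' = p' * q" using eq_fract(1)[OF assms(1) h(1)] by simp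
  then have "cpoly (p * q') s = cpoly (p' * q) s" by simp
  then have "cpoly p s * cpoly q' s = cpoly p' s * cpoly q s" by simp
  then have "cpoly p' s / cpoly q' s = cpoly p s / cpoly q s"
    using h(3) assms(3) by (simp add: frac_eq_eq algebra_simps)
  then show ?thesis using h(4) by simp
qed

lemma eval_tf_0[simp]: "eval_tf 0 s = 0"
  using eval_tf_rep[of 1 0 0 s] by (simp add: Zero_fract_def)

lemma eval_tf_add: assumes "nonpole x s" "nonpole y s"
  shows "eval_tf (x + y) s = eval_tf x s + eval_tf y s"
proof -
  from assms obtain p q p' q' where h: "q \<noteq> 0" "x = Fract p q" "cpoly q s \<noteq> 0"
    "q' \<noteq> 0" "y = Fract p' q'" "cpoly q' s \<noteq> 0" unfolding nonpole_def by blast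
  have "x + y = Fract (p * q' + p' * q) (q * q')" using h by simp
  then have e0: "eval_tf (x + y) s = cpoly (p * q' + p' * q) s / cpoly (q * q') s"
    by (intro eval_tf_rep) (use h in auto)
  have e1: "eval_tf x s = cpoly p s / cpoly q s" by (rule eval_tf_rep) (use h in auto)
  have e2: "eval_tf y s = cpoly p' s / cpoly q' s" by (rule eval_tf_rep) (use h in auto)
  show ?thesis unfolding e0 e1 e2 using h(3,6) by (simp add: field_simps)
qed

lemma eval_tf_mult: assumes "nonpole x s" "nonpole y s"
  shows "eval_tf (x * y) s = eval_tf x s * eval_tf y s"
proof -
  from assms obtain p q p' q' where h: "q \<noteq> 0" "x = Fract p q" "cpoly q s \<noteq> 0"
    "q' \<noteq> 0" "y = Fract p' q'" "cpoly q' s \<noteq> 0" unfolding nonpole_def by blast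
  have "x * y = Fract (p * p') (q * q')" using h by simp
  then have e0: "eval_tf (x * y) s = cpoly (p * p') s / cpoly (q * q') s"
    by (intro eval_tf_rep) (use h in auto)
  have e1: "eval_tf x s = cpoly p s / cpoly q s" by (rule eval_tf_rep) (use h in auto)
  have e2: "eval_tf y s = cpoly p' s / cpoly q' s" by (rule eval_tf_rep) (use h in auto)
  show ?thesis unfolding e0 e1 e2 using h(3,6) by (simp add: field_simps)
qed

lemma eval_tf_sum: "(\<And>i. i \<in> A \<Longrightarrow> nonpole (f i) s) \<Longrightarrow>
   eval_tf (sum f A) s = (\<Sum>i\<in>A. eval_tf (f i) s)"
proof (induct A rule: infinite_finite_induct)
  case (insert x F)
  then show ?case by (simp add: eval_tf_add nonpole_sum)
qed auto

lemma proper_0[simp]: "proper_tf 0"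
  unfolding proper_tf_def by (rule exI[of _ 0], rule exI[of _ 1], simp add: Zero_fract_def)

lemma proper_add: assumes "proper_tf x" "proper_tf y" shows "proper_tf (x + y)"
proof -
  from assms obtain p q p' q' where h: "q \<noteq> 0" "x = Fract p q" "degree p \<le> degree q"
    "q' \<noteq> 0" "y = Fract p' q'" "degree p' \<le> degree q'" unfolding proper_tf_def by blast
  have dq: "degree (q * q') = degree q + degree q'" using h by (simp add: degree_mult_eq)
  have "degree (p * q' + p' * q) \<le> max (degree (p * q')) (degree (p' * q))" by (rule degree_add_le_max)
  also have "\<dots> \<le> degree q + degree q'"
    using degree_mult_le[of p q'] degree_mult_le[of p' q] h by auto
  finally show ?thesis unfolding proper_tf_def
    by (intro exI[of _ "p * q' + p' * q"] exI[of _ "q * q'"]) (use h dq in auto)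
qed

lemma proper_mult: assumes "proper_tf x" "proper_tf y" shows "proper_tf (x * y)"
proof -
  from assms obtain p q p' q' where h: "q \<noteq> 0" "x = Fract p q" "degree p \<le> degree q"
    "q' \<noteq> 0" "y = Fract p' q'" "degree p' \<le> degree q'" unfolding proper_tf_def by blast
  have dq: "degree (q * q') = degree q + degree q'" using h by (simp add: degree_mult_eq)
  have "degree (p * p') \<le> degree q + degree q'"
    using degree_mult_le[of p p'] h by auto
  then show ?thesis unfolding proper_tf_def
    by (intro exI[of _ "p * p'"] exI[of _ "q * q'"]) (use h dq in auto)
qed

definition stab :: "tf \<Rightarrow> bool" where "stab x \<longleftrightarrow> proper_tf x \<and> (\<forall>s. Re s \<ge> 0 \<longrightarrow> nonpole x s)"

lemma stab_iff: "stab x = stable_tf x" unfolding stab_def stable_tf_def nonpole_iff by simp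

lemma stab_0[simp]: "stab 0" unfolding stab_def by simp
lemma stab_add: "stab x \<Longrightarrow> stab y \<Longrightarrow> stab (x + y)"
  unfolding stab_def by (auto intro: proper_add nonpole_add)
lemma stab_mult: "stab x \<Longrightarrow> stab y \<Longrightarrow> stab (x * y)"
  unfolding stab_def by (auto intro: proper_mult nonpole_mult)
lemma stab_sum: "(\<And>i. i \<in> A \<Longrightarrow> stab (f i)) \<Longrightarrow> stab (sum f A)"
  by (induct A rule: infinite_finite_induct) (auto intro: stab_add)



lemma stable_mat_iff: "stable_mat A \<longleftrightarrow> (\<forall>i<dim_row A. \<forall>j<dim_col A. stab (A $$ (i,j)))"
  unfolding stable_mat_def stab_iff by simp

lemma stab_np: "stab x \<Longrightarrow> Re s \<ge> 0 \<Longrightarrow> nonpole x s" unfolding stab_def by auto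

lemma stable_mult: assumes "stable_mat A" "stable_mat B" "dim_col A = dim_row B"
  shows "stable_mat (A * B)"
  unfolding stable_mat_iff
proof (intro allI impI)
  fix i j assume ij: "i < dim_row (A * B)" "j < dim_col (A * B)"
  have "(A * B) $$ (i,j) = (\<Sum>k\<in>{0..<dim_row B}. A $$ (i,k) * B $$ (k,j))"
    using ij assms(3) by (simp add: scalar_prod_def)
  also have "stab \<dots>" using assms ij unfolding stable_mat_iff
    by (intro stab_sum stab_mult) auto
  finally show "stab ((A * B) $$ (i,j))" .
qed

lemma stable_add: assumes "stable_mat A" "stable_mat B" "dim_row A = dim_row B" "dim_col A = dim_col B"
  shows "stable_mat (A + B)"
  using assms unfolding stable_mat_iff by (auto intro: stab_add)

lemma dim_eval_mat[simp]: "dim_row (eval_mat A s) = dim_row A" "dim_col (eval_mat A s) = dim_col A"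
  unfolding eval_mat_def by auto

lemma index_eval_mat[simp]: "i < dim_row A \<Longrightarrow> j < dim_col A \<Longrightarrow> eval_mat A s $$ (i,j) = eval_tf (A $$ (i,j)) s"
  unfolding eval_mat_def by auto

lemma eval_mat_mult: assumes "stable_mat A" "stable_mat B" "dim_col A = dim_row B" "Re s \<ge> 0"
  shows "eval_mat (A * B) s = eval_mat A s * eval_mat B s"
proof (rule eq_matI)
  fix i j assume ij: "i < dim_row (eval_mat A s * eval_mat B s)" "j < dim_col (eval_mat A s * eval_mat B s)"
  have "eval_mat (A * B) s $$ (i,j) = eval_tf (\<Sum>k\<in>{0..<dim_row B}. A $$ (i,k) * B $$ (k,j)) s"
    using ij assms(3) by (simp add: scalar_prod_def)
  also have "\<dots> = (\<Sum>k\<in>{0..<dim_row B}. eval_tf (A $$ (i,k)) s * eval_tf (B $$ (k,j)) s)"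
    using assms ij unfolding stable_mat_iff
    by (subst eval_tf_sum) (auto intro!: nonpole_mult stab_np eval_tf_mult sum.cong stab_mult)
  also have "\<dots> = (eval_mat A s * eval_mat B s) $$ (i,j)"
    using ij assms(3) by (simp add: scalar_prod_def)
  finally show "eval_mat (A * B) s $$ (i,j) = (eval_mat A s * eval_mat B s) $$ (i,j)" .
qed auto

lemma eval_mat_add: assumes "stable_mat A" "stable_mat B" "dim_row A = dim_row B" "dim_col A = dim_col B" "Re s \<ge> 0"
  shows "eval_mat (A + B) s = eval_mat A s + eval_mat B s"
  using assms unfolding stable_mat_iff by (intro eq_matI) (auto intro!: eval_tf_add stab_np)

lemma stable_zero[simp]: "stable_mat (0\<^sub>m n m)" unfolding stable_mat_iff by auto

lemma stable_four: assumes "stable_mat A" "stable_mat B" "stable_mat C" "stable_mat D"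
  "dim_row A = dim_row B" "dim_col A = dim_col C" "dim_row C = dim_row D" "dim_col B = dim_col D"
  shows "stable_mat (four_block_mat A B C D)"
  using assms unfolding stable_mat_iff by auto

lemma eval_mat_four_diag: "eval_mat (four_block_mat A (0\<^sub>m (dim_row A) (dim_col D)) (0\<^sub>m (dim_row D) (dim_col A)) D) s
  = four_block_mat (eval_mat A s) (0\<^sub>m (dim_row A) (dim_col D)) (0\<^sub>m (dim_row D) (dim_col A)) (eval_mat D s)"
  by (rule eq_matI) auto

lemma stable_diag_blocks: "(\<And>i. i < n \<Longrightarrow> stable_mat (F i)) \<Longrightarrow> stable_mat (diag_blocks F n)"
  by (induct n) (auto intro!: stable_four)



no_notation vec_nth (infixl "$" 90)


lemma vnorm_L2: "vnorm x = L2_set (\<lambda>i. cmod (x $ i)) {..<dim_vec x}"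
  unfolding vnorm_def L2_set_def by simp

lemma vnorm_nonneg[simp]: "0 \<le> vnorm x" unfolding vnorm_def by (simp add: sum_nonneg)

lemma vnorm_comp: "i < dim_vec x \<Longrightarrow> cmod (x $ i) \<le> vnorm x"
  unfolding vnorm_L2 by (rule member_le_L2_set) auto

lemma vnorm_le_sum: "vnorm x \<le> (\<Sum>i<dim_vec x. cmod (x $ i))"
  unfolding vnorm_L2 by (rule L2_set_le_sum) auto

lemma vnorm_smult: "vnorm (c \<cdot>\<^sub>v x) = cmod c * vnorm x"
  unfolding vnorm_L2 by (simp add: L2_set_right_distrib norm_mult, intro L2_set_cong) (auto simp: norm_mult)

lemma vnorm_add: assumes "dim_vec x = dim_vec y" shows "vnorm (x + y) \<le> vnorm x + vnorm y"
proof -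
  have "vnorm (x + y) = L2_set (\<lambda>i. cmod (x $ i + y $ i)) {..<dim_vec x}"
    unfolding vnorm_L2 using assms by (auto intro!: L2_set_cong)
  also have "\<dots> \<le> L2_set (\<lambda>i. cmod (x $ i) + cmod (y $ i)) {..<dim_vec x}"
    by (rule L2_set_mono) (auto intro: norm_triangle_ineq)
  also have "\<dots> \<le> vnorm x + vnorm y" unfolding vnorm_L2 using assms by (simp add: L2_set_triangle_ineq)
  finally show ?thesis .
qed

lemma vnorm_zero_imp: assumes "vnorm x = 0" "i < dim_vec x" shows "x $ i = 0"
  using vnorm_comp[OF assms(2)] assms(1) by simp

lemma vnorm_sq: "(vnorm x)\<^sup>2 = (\<Sum>i<dim_vec x. (cmod (x $ i))\<^sup>2)"
  unfolding vnorm_def by (simp add: sum_nonneg)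

definition bnd :: "complex mat \<Rightarrow> real" where
  "bnd A = (\<Sum>i<dim_row A. \<Sum>j<dim_col A. cmod (A $$ (i,j)))"

lemma vnorm_mult_bnd: assumes x: "x \<in> carrier_vec (dim_col A)" "vnorm x \<le> 1"
  shows "vnorm (A *\<^sub>v x) \<le> bnd A"
proof -
  have "vnorm (A *\<^sub>v x) \<le> (\<Sum>i<dim_row A. cmod ((A *\<^sub>v x) $ i))"
    using vnorm_le_sum[of "A *\<^sub>v x"] by simp
  also have "\<dots> \<le> bnd A" unfolding bnd_def
  proof (rule sum_mono)
    fix i assume i: "i \<in> {..<dim_row A}"
    have "cmod ((A *\<^sub>v x) $ i) = cmod (\<Sum>j\<in>{0..<dim_col A}. A $$ (i,j) * x $ j)"
      using i x by (simp add: scalar_prod_def)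
    also have "\<dots> \<le> (\<Sum>j\<in>{0..<dim_col A}. cmod (A $$ (i,j) * x $ j))" by (rule norm_sum)
    also have "\<dots> \<le> (\<Sum>j\<in>{0..<dim_col A}. cmod (A $$ (i,j)))"
    proof (rule sum_mono)
      fix j assume j: "j \<in> {0..<dim_col A}"
      have "cmod (x $ j) \<le> 1" using vnorm_comp[of j x] x j by auto
      then show "cmod (A $$ (i,j) * x $ j) \<le> cmod (A $$ (i,j))"
        by (simp add: norm_mult mult_left_le)
    qed
    finally show "cmod ((A *\<^sub>v x) $ i) \<le> (\<Sum>j<dim_col A. cmod (A $$ (i,j)))"
      by (simp add: lessThan_atLeast0)
  qed
  finally show ?thesis .
qed

definition Sset :: "complex mat \<Rightarrow> real set" where
  "Sset A = {vnorm (A *\<^sub>v x) | x. x \<in> carrier_vec (dim_col A) \<and> vnorm x \<le> 1}"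

lemma opnorm_Sset: "opnorm A = Sup (Sset A)" unfolding opnorm_def Sset_def by simp

lemma Sset_bdd: "bdd_above (Sset A)"
  unfolding Sset_def by (rule bdd_aboveI[of _ "bnd A"]) (auto intro: vnorm_mult_bnd)

lemma vnorm_zero_vec[simp]: "vnorm (0\<^sub>v n) = 0" unfolding vnorm_def by simp

lemma Sset_ne: "0 \<in> Sset A"
  unfolding Sset_def
  by (rule CollectI, rule exI[of _ "0\<^sub>v (dim_col A)"]) (auto simp: vnorm_def scalar_prod_def)

lemma opnorm_nonneg: "0 \<le> opnorm A"
  unfolding opnorm_Sset using Sset_ne Sset_bdd by (rule cSup_upper)

lemma opnorm_ge: "x \<in> carrier_vec (dim_col A) \<Longrightarrow> vnorm x \<le> 1 \<Longrightarrow> vnorm (A *\<^sub>v x) \<le> opnorm A"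
  unfolding opnorm_Sset by (rule cSup_upper[OF _ Sset_bdd]) (auto simp: Sset_def)

lemma opnorm_le: assumes "\<And>x. x \<in> carrier_vec (dim_col A) \<Longrightarrow> vnorm x \<le> 1 \<Longrightarrow> vnorm (A *\<^sub>v x) \<le> b"
  shows "opnorm A \<le> b"
  unfolding opnorm_Sset using Sset_ne by (intro cSup_least) (auto simp: Sset_def intro: assms)

lemma opnorm_bound: assumes x: "x \<in> carrier_vec (dim_col A)"
  shows "vnorm (A *\<^sub>v x) \<le> opnorm A * vnorm x"
proof (cases "vnorm x = 0")
  case True
  have "A *\<^sub>v x = 0\<^sub>v (dim_row A)"
    using x True vnorm_zero_imp[OF True] by (intro eq_vecI) (auto simp: scalar_prod_def)
  then show ?thesis using True by simp
next
  case False
  then have r: "vnorm x > 0" using vnorm_nonneg[of x] by linarith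
  define y where "y = complex_of_real (1 / vnorm x) \<cdot>\<^sub>v x"
  have y: "y \<in> carrier_vec (dim_col A)" "vnorm y \<le> 1"
    using x r unfolding y_def by (auto simp: vnorm_smult norm_divide)
  have "A *\<^sub>v y = complex_of_real (1 / vnorm x) \<cdot>\<^sub>v (A *\<^sub>v x)"
    unfolding y_def by (rule mult_mat_vec[OF _ x]) auto
  then have "vnorm (A *\<^sub>v y) = vnorm (A *\<^sub>v x) / vnorm x" using r by (simp add: vnorm_smult norm_divide)
  with opnorm_ge[OF y] have "vnorm (A *\<^sub>v x) / vnorm x \<le> opnorm A" by simp
  then show ?thesis using r by (simp add: divide_le_eq mult.commute)
qed

lemma opnorm_mult: assumes "dim_col A = dim_row B"
  shows "opnorm (A * B) \<le> opnorm A * opnorm B"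
proof (rule opnorm_le)
  fix x assume x: "x \<in> carrier_vec (dim_col (A * B))" "vnorm x \<le> 1"
  have xB: "x \<in> carrier_vec (dim_col B)" using x(1) unfolding carrier_vec_def by auto
  have A: "A \<in> carrier_mat (dim_row A) (dim_row B)" using assms by (intro carrier_matI) auto
  have B: "B \<in> carrier_mat (dim_row B) (dim_col B)" by (intro carrier_matI) auto
  have e: "(A * B) *\<^sub>v x = A *\<^sub>v (B *\<^sub>v x)" by (rule assoc_mult_mat_vec[OF A B xB])
  have Bx: "B *\<^sub>v x \<in> carrier_vec (dim_col A)" using assms by (intro carrier_vecI) auto
  have "vnorm (A *\<^sub>v (B *\<^sub>v x)) \<le> opnorm A * vnorm (B *\<^sub>v x)" by (rule opnorm_bound[OF Bx])
  also have "\<dots> \<le> opnorm A * (opnorm B * vnorm x)"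
    by (rule mult_left_mono[OF opnorm_bound[OF xB] opnorm_nonneg])
  also have "\<dots> \<le> opnorm A * opnorm B"
    by (rule mult_left_mono[OF mult_left_le[OF x(2) opnorm_nonneg] opnorm_nonneg])
  finally show "vnorm ((A * B) *\<^sub>v x) \<le> opnorm A * opnorm B" unfolding e .
qed


lemma opnorm_add: assumes "dim_row A = dim_row B" "dim_col A = dim_col B"
  shows "opnorm (A + B) \<le> opnorm A + opnorm B"
proof (rule opnorm_le)
  fix x assume x: "x \<in> carrier_vec (dim_col (A + B))" "vnorm x \<le> 1"
  have A: "A \<in> carrier_mat (dim_row A) (dim_col A)" by (intro carrier_matI) auto
  have B: "B \<in> carrier_mat (dim_row A) (dim_col A)" using assms by (intro carrier_matI) auto
  have xA: "x \<in> carrier_vec (dim_col A)" using x(1) assms unfolding carrier_vec_def by auto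
  have xB: "x \<in> carrier_vec (dim_col B)" using x(1) assms unfolding carrier_vec_def by auto
  have e: "(A + B) *\<^sub>v x = A *\<^sub>v x + B *\<^sub>v x" by (rule add_mult_distrib_mat_vec[OF A B xA])
  have "vnorm (A *\<^sub>v x + B *\<^sub>v x) \<le> vnorm (A *\<^sub>v x) + vnorm (B *\<^sub>v x)"
    using assms by (intro vnorm_add) simp
  also have "\<dots> \<le> opnorm A + opnorm B" by (rule add_mono[OF opnorm_ge[OF xA x(2)] opnorm_ge[OF xB x(2)]])
  finally show "vnorm ((A + B) *\<^sub>v x) \<le> opnorm A + opnorm B" unfolding e .
qed

lemma sq_append: "(\<Sum>i<dim_vec (u @\<^sub>v w). (cmod ((u @\<^sub>v w) $ i))\<^sup>2)
   = (\<Sum>i<dim_vec u. (cmod (u $ i))\<^sup>2) + (\<Sum>i<dim_vec w. (cmod (w $ i))\<^sup>2)"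
proof -
  let ?n = "dim_vec u" and ?m = "dim_vec w"
  have "(\<Sum>i<dim_vec (u @\<^sub>v w). (cmod ((u @\<^sub>v w) $ i))\<^sup>2)
      = (\<Sum>i\<in>{0..<?n + ?m}. (cmod ((u @\<^sub>v w) $ i))\<^sup>2)" by (simp add: lessThan_atLeast0)
  also have "\<dots> = (\<Sum>i\<in>{0..<?n}. (cmod ((u @\<^sub>v w) $ i))\<^sup>2) + (\<Sum>i\<in>{?n..<?n + ?m}. (cmod ((u @\<^sub>v w) $ i))\<^sup>2)"
    by (rule sum.atLeastLessThan_concat[symmetric]) auto
  also have "(\<Sum>i\<in>{0..<?n}. (cmod ((u @\<^sub>v w) $ i))\<^sup>2) = (\<Sum>i<?n. (cmod (u $ i))\<^sup>2)"
    by (auto simp: lessThan_atLeast0 intro!: sum.cong)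
  also have "(\<Sum>i\<in>{?n..<?n + ?m}. (cmod ((u @\<^sub>v w) $ i))\<^sup>2) = (\<Sum>i\<in>{0..<?m}. (cmod ((u @\<^sub>v w) $ (i + ?n)))\<^sup>2)"
    using sum.shift_bounds_nat_ivl[of "\<lambda>i. (cmod ((u @\<^sub>v w) $ i))\<^sup>2" 0 ?n ?m] by (simp add: add.commute)
  also have "\<dots> = (\<Sum>i<?m. (cmod (w $ i))\<^sup>2)"
    by (auto simp: lessThan_atLeast0 intro!: sum.cong)
  finally show ?thesis .
qed

lemma vnorm_append_sq: "(vnorm (u @\<^sub>v w))\<^sup>2 = (vnorm u)\<^sup>2 + (vnorm w)\<^sup>2"
  unfolding vnorm_sq by (rule sq_append)

lemma opnorm_diag: assumes "opnorm A \<le> b" "opnorm D \<le> b"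
  shows "opnorm (four_block_mat A (0\<^sub>m (dim_row A) (dim_col D)) (0\<^sub>m (dim_row D) (dim_col A)) D) \<le> b"
proof (rule opnorm_le)
  let ?M = "four_block_mat A (0\<^sub>m (dim_row A) (dim_col D)) (0\<^sub>m (dim_row D) (dim_col A)) D"
  fix x assume x: "x \<in> carrier_vec (dim_col ?M)" "vnorm x \<le> 1"
  have b0: "0 \<le> b" using assms(1) opnorm_nonneg[of A] by linarith
  let ?a = "vec_first x (dim_col A)" and ?d = "vec_last x (dim_col D)"
  have xe: "x = ?a @\<^sub>v ?d" using x by simp
  have A: "A \<in> carrier_mat (dim_row A) (dim_col A)" and D: "D \<in> carrier_mat (dim_row D) (dim_col D)" by auto
  have "?M *\<^sub>v x = (A *\<^sub>v ?a + 0\<^sub>m (dim_row A) (dim_col D) *\<^sub>v ?d) @\<^sub>v (0\<^sub>m (dim_row D) (dim_col A) *\<^sub>v ?a + D *\<^sub>v ?d)"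
    by (subst xe, rule four_block_mat_mult_vec[OF A _ _ D]) auto
  also have "\<dots> = (A *\<^sub>v ?a) @\<^sub>v (D *\<^sub>v ?d)"
    by (intro arg_cong2[where f = append_vec]) (auto intro!: eq_vecI simp: scalar_prod_def)
  finally have Mx: "?M *\<^sub>v x = (A *\<^sub>v ?a) @\<^sub>v (D *\<^sub>v ?d)" .
  have ea: "vnorm (A *\<^sub>v ?a) \<le> b * vnorm ?a"
    using opnorm_bound[of ?a A] mult_right_mono[OF assms(1) vnorm_nonneg[of ?a]] by simp
  have ed: "vnorm (D *\<^sub>v ?d) \<le> b * vnorm ?d"
    using opnorm_bound[of ?d D] mult_right_mono[OF assms(2) vnorm_nonneg[of ?d]] by simp
  have "(vnorm (?M *\<^sub>v x))\<^sup>2 = (vnorm (A *\<^sub>v ?a))\<^sup>2 + (vnorm (D *\<^sub>v ?d))\<^sup>2"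
    unfolding Mx by (rule vnorm_append_sq)
  also have "\<dots> \<le> (b * vnorm ?a)\<^sup>2 + (b * vnorm ?d)\<^sup>2"
    using ea ed by (intro add_mono power_mono) auto
  also have "\<dots> = b\<^sup>2 * (vnorm x)\<^sup>2"
    using vnorm_append_sq[of ?a ?d] xe by (simp add: power_mult_distrib algebra_simps)
  also have "\<dots> \<le> b\<^sup>2" using x by (simp add: power_le_one mult_left_le)
  finally have "(vnorm (?M *\<^sub>v x))\<^sup>2 \<le> b\<^sup>2" .
  then show "vnorm (?M *\<^sub>v x) \<le> b" using b0 by (rule power2_le_imp_le)
qed



definition kertriv :: "tf mat \<Rightarrow> nat \<Rightarrow> bool" where
  "kertriv A n \<longleftrightarrow> (\<forall>v \<in> carrier_vec n. A *\<^sub>v v = 0\<^sub>v n \<longrightarrow> v = 0\<^sub>v n)"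

lemma minv_props: assumes A: "A \<in> carrier_mat n n" and k: "kertriv A n"
  shows "minv A * A = 1\<^sub>m n" "A * minv A = 1\<^sub>m n" "minv A \<in> carrier_mat n n"
proof -
  have "Determinant.det A \<noteq> 0" using det_0_iff_vec_prod_zero_field[OF A] k unfolding kertriv_def by blast
  from det_non_zero_imp_unit[OF A this, of "()"]
  have U: "A \<in> Units (ring_mat TYPE(tf) n ())" .
  have "mat_inverse A \<noteq> None" using mat_inverse(1)[OF A, of "()"] U by blast
  then obtain B where B: "mat_inverse A = Some B" by auto
  then have "minv A = B" unfolding minv_def by simp
  with mat_inverse(2)[OF A B] show "minv A * A = 1\<^sub>m n" "A * minv A = 1\<^sub>m n" "minv A \<in> carrier_mat n n"
    by auto
qed

lemma inv_loop: assumes "invertible_mat M" "M \<in> carrier_mat m m" "w \<in> carrier_vec m" "M *\<^sub>v w = 0\<^sub>v m"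
  shows "w = 0\<^sub>v m"
proof -
  obtain B where B: "M * B = 1\<^sub>m (dim_row M)" "B * M = 1\<^sub>m (dim_row B)"
    using assms(1) unfolding invertible_mat_def inverts_mat_def by blast
  have dB: "dim_row B = m"
  proof -
    have "dim_col (B * M) = m" using assms(2) by simp
    then show ?thesis using B(2) by (metis index_one_mat(3))
  qed
  have Bc: "B \<in> carrier_mat m m"
  proof -
    have "dim_col (M * B) = dim_col B" by simp
    then have "dim_col B = m" using B(1) assms(2) by (metis carrier_matD(1) index_one_mat(3))
    then show ?thesis using dB by (intro carrier_matI) auto
  qed
  have "w = (B * M) *\<^sub>v w" using B(2) dB assms(3) by simp
  also have "\<dots> = B *\<^sub>v (M *\<^sub>v w)" using Bc assms(2,3) by (rule assoc_mult_mat_vec)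
  also have "\<dots> = 0\<^sub>v m" unfolding assms(4) using Bc by (intro eq_vecI) (auto simp: scalar_prod_def)
  finally show ?thesis .
qed

lemma loop_ker1: assumes P: "P \<in> carrier_mat p q" and K: "K \<in> carrier_mat q p"
  and inv: "invertible_mat (loop_mat P K)"
  shows "kertriv (1\<^sub>m p - P * K) p"
  unfolding kertriv_def
proof (intro ballI impI)
  fix v assume v: "v \<in> carrier_vec p" and e: "(1\<^sub>m p - P * K) *\<^sub>v v = 0\<^sub>v p"
  let ?w = "v @\<^sub>v (K *\<^sub>v v)"
  have Kv: "K *\<^sub>v v \<in> carrier_vec q" using K v by simp
  have lm: "loop_mat P K = four_block_mat (1\<^sub>m p) (-P) (-K) (1\<^sub>m q)" unfolding loop_mat_def using P K by simp
  have M: "loop_mat P K \<in> carrier_mat (p + q) (p + q)" unfolding loop_mat_def using P K by auto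
  have "loop_mat P K *\<^sub>v ?w = (1\<^sub>m p *\<^sub>v v + (- P) *\<^sub>v (K *\<^sub>v v)) @\<^sub>v ((- K) *\<^sub>v v + 1\<^sub>m q *\<^sub>v (K *\<^sub>v v))"
    unfolding lm by (rule four_block_mat_mult_vec) (use P K v Kv in auto)
  also have "1\<^sub>m p *\<^sub>v v + (- P) *\<^sub>v (K *\<^sub>v v) = (1\<^sub>m p - P * K) *\<^sub>v v"
    using P K v by (simp add: minus_mult_distrib_mat_vec[of _ p p] minus_add_uminus_vec[of _ p])
  also have "(- K) *\<^sub>v v + 1\<^sub>m q *\<^sub>v (K *\<^sub>v v) = 0\<^sub>v q"
    using K v Kv by (intro eq_vecI) auto
  finally have "loop_mat P K *\<^sub>v ?w = 0\<^sub>v p @\<^sub>v 0\<^sub>v q" using e by simp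
  also have "\<dots> = 0\<^sub>v (p + q)" by (intro eq_vecI) auto
  finally have "?w = 0\<^sub>v (p + q)" using inv_loop[OF inv M] v Kv by auto
  then show "v = 0\<^sub>v p" using v
  proof (intro eq_vecI)
    fix i assume i: "i < dim_vec (0\<^sub>v p)"
    have "?w $ i = 0\<^sub>v (p + q) $ i" using \<open>?w = 0\<^sub>v (p + q)\<close> by simp
    then show "v $ i = 0\<^sub>v p $ i" using i v by simp
  qed simp
qed

lemma loop_ker2: assumes P: "P \<in> carrier_mat p q" and K: "K \<in> carrier_mat q p"
  and inv: "invertible_mat (loop_mat P K)"
  shows "kertriv (1\<^sub>m q - K * P) q"
  unfolding kertriv_def
proof (intro ballI impI)
  fix v assume v: "v \<in> carrier_vec q" and e: "(1\<^sub>m q - K * P) *\<^sub>v v = 0\<^sub>v q"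
  let ?w = "(P *\<^sub>v v) @\<^sub>v v"
  have Pv: "P *\<^sub>v v \<in> carrier_vec p" using P v by simp
  have lm: "loop_mat P K = four_block_mat (1\<^sub>m p) (-P) (-K) (1\<^sub>m q)" unfolding loop_mat_def using P K by simp
  have M: "loop_mat P K \<in> carrier_mat (p + q) (p + q)" unfolding loop_mat_def using P K by auto
  have "loop_mat P K *\<^sub>v ?w = (1\<^sub>m p *\<^sub>v (P *\<^sub>v v) + (- P) *\<^sub>v v) @\<^sub>v ((- K) *\<^sub>v (P *\<^sub>v v) + 1\<^sub>m q *\<^sub>v v)"
    unfolding lm by (rule four_block_mat_mult_vec) (use P K v Pv in auto)
  also have "(- K) *\<^sub>v (P *\<^sub>v v) + 1\<^sub>m q *\<^sub>v v = (1\<^sub>m q - K * P) *\<^sub>v v"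
  proof (intro eq_vecI)
    fix i assume i: "i < dim_vec ((1\<^sub>m q - K * P) *\<^sub>v v)"
    have "((1\<^sub>m q - K * P) *\<^sub>v v) = 1\<^sub>m q *\<^sub>v v - (K * P) *\<^sub>v v"
      using K P v by (intro minus_mult_distrib_mat_vec) auto
    also have "(K * P) *\<^sub>v v = K *\<^sub>v (P *\<^sub>v v)" using K P v by (intro assoc_mult_mat_vec) auto
    finally have "((1\<^sub>m q - K * P) *\<^sub>v v) = 1\<^sub>m q *\<^sub>v v - K *\<^sub>v (P *\<^sub>v v)" .
    then show "((- K) *\<^sub>v (P *\<^sub>v v) + 1\<^sub>m q *\<^sub>v v) $ i = ((1\<^sub>m q - K * P) *\<^sub>v v) $ i"
      using i K P v Pv by simp
  qed (use K in simp)
  also have "1\<^sub>m p *\<^sub>v (P *\<^sub>v v) + (- P) *\<^sub>v v = 0\<^sub>v p"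
    using P v Pv by (intro eq_vecI) auto
  finally have "loop_mat P K *\<^sub>v ?w = 0\<^sub>v p @\<^sub>v 0\<^sub>v q" using e by simp
  also have "\<dots> = 0\<^sub>v (p + q)" by (intro eq_vecI) auto
  finally have w0: "?w = 0\<^sub>v (p + q)" using inv_loop[OF inv M] v Pv by auto
  then show "v = 0\<^sub>v q"
  proof (intro eq_vecI)
    fix i assume i: "i < dim_vec (0\<^sub>v q)"
    have "?w $ (p + i) = 0\<^sub>v (p + q) $ (p + i)" using w0 by simp
    then show "v $ i = 0\<^sub>v q $ i" using i v Pv P by simp
  qed (use v in simp)
qed

lemma solve_lin: assumes X: "X \<in> carrier_mat n n" and E: "E \<in> carrier_mat n c" and R: "R \<in> carrier_mat n c"
  and eq: "E = X * E + R" and k: "kertriv (1\<^sub>m n - X) n"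
  shows "E = minv (1\<^sub>m n - X) * R"
proof -
  have IX: "1\<^sub>m n - X \<in> carrier_mat n n" using X by (intro carrier_matI) auto
  note mp = minv_props[OF IX k]
  have "(1\<^sub>m n - X) * E = 1\<^sub>m n * E - X * E" using X E by (intro minus_mult_distrib_mat) auto
  also have "\<dots> = R"
  proof (intro eq_matI)
    fix i j assume ij: "i < dim_row R" "j < dim_col R"
    have "E $$ (i,j) = (X * E + R) $$ (i,j)" using eq by simp
    then show "(1\<^sub>m n * E - X * E) $$ (i, j) = R $$ (i, j)" using ij X E R by simp
  qed (use X E R in auto)
  finally have 1: "(1\<^sub>m n - X) * E = R" .
  have "minv (1\<^sub>m n - X) * R = (minv (1\<^sub>m n - X) * (1\<^sub>m n - X)) * E"
    unfolding 1[symmetric] using mp(3) IX E by (intro assoc_mult_mat[symmetric]) auto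
  also have "\<dots> = E" using mp(1) E by simp
  finally show ?thesis by simp
qed



lemma offset_Suc[simp]: "offset r (Suc n) = offset r n + r n" unfolding offset_def by simp
lemma offset_0[simp]: "offset r 0 = 0" unfolding offset_def by simp

lemma diag_blocks_carrier: "(\<And>i. i < n \<Longrightarrow> F i \<in> carrier_mat (r i) (c i)) \<Longrightarrow>
   diag_blocks F n \<in> carrier_mat (offset r n) (offset c n)"
proof (induct n)
  case 0 then show ?case by simp
next
  case (Suc n)
  then have "diag_blocks F n \<in> carrier_mat (offset r n) (offset c n)" "F n \<in> carrier_mat (r n) (c n)" by auto
  then show ?case by (metis carrier_matD carrier_matI diag_blocks.simps(2) index_mat_four_block(2,3) offset_Suc)
qed

lemma stack_carrier: "(\<And>i. i < n \<Longrightarrow> F i \<in> carrier_mat (r i) c) \<Longrightarrow>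
   stack_rows c F n \<in> carrier_mat (offset r n) c"
proof (induct n)
  case 0 then show ?case by simp
next
  case (Suc n)
  then have "stack_rows c F n \<in> carrier_mat (offset r n) c" "F n \<in> carrier_mat (r n) c" by auto
  then show ?case by simp
qed

lemma append_rows_add: assumes "A \<in> carrier_mat n1 c" "A' \<in> carrier_mat n1 c" "B \<in> carrier_mat n2 c" "B' \<in> carrier_mat n2 c"
  shows "(A + A') @\<^sub>r (B + B') = (A @\<^sub>r B) + (A' @\<^sub>r B')"
  using assms unfolding append_rows_def by (intro eq_matI) auto

lemma stack_add: "(\<And>i. i < n \<Longrightarrow> B i \<in> carrier_mat (r i) c \<and> C i \<in> carrier_mat (r i) c) \<Longrightarrow>
   stack_rows c (\<lambda>i. B i + C i) n = stack_rows c B n + stack_rows c C n"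
proof (induct n)
  case 0 then show ?case by (intro eq_matI) auto
next
  case (Suc n)
  have "stack_rows c B n \<in> carrier_mat (offset r n) c" "stack_rows c C n \<in> carrier_mat (offset r n) c"
    using Suc(2) by (auto intro!: stack_carrier)
  moreover have "B n \<in> carrier_mat (r n) c" "C n \<in> carrier_mat (r n) c" using Suc(2) by auto
  ultimately show ?case using Suc by (simp add: append_rows_add[of _ "offset r n" c _ _ "r n"])
qed

lemma stack_mult: "(\<And>i. i < n \<Longrightarrow> A i \<in> carrier_mat (r i) (m i) \<and> B i \<in> carrier_mat (m i) c) \<Longrightarrow>
   stack_rows c (\<lambda>i. A i * B i) n = diag_blocks A n * stack_rows c B n"
proof (induct n)
  case 0 then show ?case by (intro eq_matI) auto
next
  case (Suc n)
  have D: "diag_blocks A n \<in> carrier_mat (offset r n) (offset m n)" using Suc(2) by (auto intro!: diag_blocks_carrier)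
  have S: "stack_rows c B n \<in> carrier_mat (offset m n) c" using Suc(2) by (auto intro!: stack_carrier)
  have An: "A n \<in> carrier_mat (r n) (m n)" and Bn: "B n \<in> carrier_mat (m n) c" using Suc(2) by auto
  have IH: "stack_rows c (\<lambda>i. A i * B i) n = diag_blocks A n * stack_rows c B n" using Suc by auto
  have "diag_blocks A (Suc n) * stack_rows c B (Suc n) =
     four_block_mat (diag_blocks A n) (0\<^sub>m (offset r n) (m n)) (0\<^sub>m (r n) (offset m n)) (A n) *
     four_block_mat (stack_rows c B n) (0\<^sub>m (offset m n) 0) (B n) (0\<^sub>m (m n) 0)"
    using D S An Bn by (simp add: append_rows_def)
  also have "\<dots> = four_block_mat (diag_blocks A n * stack_rows c B n + 0\<^sub>m (offset r n) (m n) * B n)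
       (diag_blocks A n * 0\<^sub>m (offset m n) 0 + 0\<^sub>m (offset r n) (m n) * 0\<^sub>m (m n) 0)
       (0\<^sub>m (r n) (offset m n) * stack_rows c B n + A n * B n)
       (0\<^sub>m (r n) (offset m n) * 0\<^sub>m (offset m n) 0 + A n * 0\<^sub>m (m n) 0)"
    by (rule mult_four_block_mat[OF D _ _ An S _ Bn]) auto
  also have "\<dots> = (diag_blocks A n * stack_rows c B n) @\<^sub>r (A n * B n)"
    unfolding append_rows_def using D S An Bn by (intro eq_matI) auto
  finally show ?case using IH by simp
qed

definition idm :: "nat \<Rightarrow> nat \<Rightarrow> tf mat" where
  "idm k c = mat k c (\<lambda>(r,j). if j = r then 1 else 0)"

lemma stack_dblock: "n \<le> N \<Longrightarrow> stack_rows (offset nd N) (d_block nd N) n = idm (offset nd n) (offset nd N)"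
proof (induct n)
  case 0 then show ?case unfolding idm_def by (intro eq_matI) auto
next
  case (Suc n)
  then have IH: "stack_rows (offset nd N) (d_block nd N) n = idm (offset nd n) (offset nd N)" by auto
  show ?case unfolding stack_rows.simps IH append_rows_def
    by (intro eq_matI) (auto simp: idm_def d_block_def)
qed

lemma stack_dblock_N: "stack_rows (offset nd N) (d_block nd N) N = 1\<^sub>m (offset nd N)"
  using stack_dblock[of N N nd] unfolding idm_def by (intro eq_matI) auto

lemma Rmat_mult: assumes "Y \<in> carrier_mat p c" "G \<in> carrier_mat p q" "V \<in> carrier_mat q c"
  shows "Rmat G * (Y @\<^sub>r V) = Y - G * V"
proof -
  have "Rmat G * (Y @\<^sub>r V) = four_block_mat (1\<^sub>m p) (- G) (0\<^sub>m 0 p) (0\<^sub>m 0 q) *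
     four_block_mat Y (0\<^sub>m p 0) V (0\<^sub>m q 0)"
    using assms unfolding Rmat_def append_cols_def append_rows_def by simp
  also have "\<dots> = four_block_mat (1\<^sub>m p * Y + (- G) * V) (1\<^sub>m p * 0\<^sub>m p 0 + (- G) * 0\<^sub>m q 0)
     (0\<^sub>m 0 p * Y + 0\<^sub>m 0 q * V) (0\<^sub>m 0 p * 0\<^sub>m p 0 + 0\<^sub>m 0 q * 0\<^sub>m q 0)"
    by (rule mult_four_block_mat) (use assms in auto)
  also have "\<dots> = Y - G * V" using assms by (intro eq_matI) auto
  finally show ?thesis .
qed



lemma opnorm_empty: "dim_col A = 0 \<Longrightarrow> 0 \<le> b \<Longrightarrow> opnorm A \<le> b"
  by (rule opnorm_le) (auto simp: vnorm_def scalar_prod_def)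

lemma opnorm_eval_diag: assumes "\<And>i. i < n \<Longrightarrow> opnorm (eval_mat (F i) s) \<le> b" "0 \<le> b"
  shows "opnorm (eval_mat (diag_blocks F n) s) \<le> b"
  using assms(1)
proof (induct n)
  case 0 then show ?case using assms(2) by (intro opnorm_empty) auto
next
  case (Suc n)
  have "opnorm (eval_mat (diag_blocks F n) s) \<le> b" using Suc by auto
  moreover have "opnorm (eval_mat (F n) s) \<le> b" using Suc by auto
  ultimately show ?case unfolding diag_blocks.simps eval_mat_four_diag
    using opnorm_diag[of "eval_mat (diag_blocks F n) s" b "eval_mat (F n) s"] by simp
qed

lemma stack_cong: "(\<And>i. i < n \<Longrightarrow> F i = G i) \<Longrightarrow> stack_rows c F n = stack_rows c G n"
  by (induct n) auto

lemma Mhat_carrier: assumes "Gad \<in> carrier_mat na nd" "Gau \<in> carrier_mat na nu"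
  "Gyu \<in> carrier_mat ny nu" "Gyd \<in> carrier_mat ny nd" "K \<in> carrier_mat nu ny"
  "minv (1\<^sub>m ny - Gyu * K) \<in> carrier_mat ny ny"
  shows "Mhat Gad Gau Gyu Gyd K \<in> carrier_mat na nd"
  using assms unfolding Mhat_def by (intro add_carrier_mat mult_carrier_mat) auto

lemma local_eq:
  assumes Ga: "Ga \<in> carrier_mat na nv" and Gad: "Gad \<in> carrier_mat na nd" and Gau: "Gau \<in> carrier_mat na nu"
    and Gyv: "Gyv \<in> carrier_mat ny nv" and Gyd: "Gyd \<in> carrier_mat ny nd" and Gyu: "Gyu \<in> carrier_mat ny nu"
    and K: "K \<in> carrier_mat nu ny" and db: "db \<in> carrier_mat nd c"
    and V: "V \<in> carrier_mat nv c" and Y: "Y \<in> carrier_mat ny c" and U: "U \<in> carrier_mat nu c"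
    and A: "A \<in> carrier_mat na c"
    and eA: "A = Ga * V + Gad * db + Gau * U"
    and eY: "Y = Gyv * V + Gyd * db + Gyu * U"
    and eU: "U = K * Rmat Gyv * (Y @\<^sub>r V)"
    and kt: "kertriv (1\<^sub>m ny - Gyu * K) ny"
  shows "A = Ga * V + Mhat Gad Gau Gyu Gyd K * db"
proof -
  define E where "E = Y - Gyv * V"
  have Ec: "E \<in> carrier_mat ny c" unfolding E_def using Y Gyv V by auto
  have R: "Rmat Gyv \<in> carrier_mat ny (ny + nv)" unfolding Rmat_def append_cols_def using Gyv by auto
  have YV: "Y @\<^sub>r V \<in> carrier_mat (ny + nv) c" using Y V by auto
  have UE: "U = K * E"
    unfolding eU E_def using assoc_mult_mat[OF K R YV] Rmat_mult[OF Y Gyv V] by simp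
  have "E = (Gyu * K) * E + Gyd * db"
  proof -
    have "(Gyu * K) * E = Gyu * U" unfolding UE using Gyu K Ec by (rule assoc_mult_mat)
    then show ?thesis unfolding E_def using eY Y Gyv V Gyd db Gyu U
      by (intro eq_matI) auto
  qed
  then have E: "E = minv (1\<^sub>m ny - Gyu * K) * (Gyd * db)"
    by (intro solve_lin[OF _ Ec _ _ kt]) (use Gyu K Gyd db in auto)
  define Mi where "Mi = minv (1\<^sub>m ny - Gyu * K)"
  have Mi: "Mi \<in> carrier_mat ny ny" unfolding Mi_def using Gyu K kt
    by (intro minv_props(3)) auto
  have "Gau * U = Gau * (K * (Mi * (Gyd * db)))" unfolding UE E Mi_def ..
  also have "\<dots> = (Gau * K) * (Mi * (Gyd * db))"
    using Gau K Mi Gyd db by (intro assoc_mult_mat[symmetric]) auto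
  also have "\<dots> = ((Gau * K) * Mi) * (Gyd * db)"
    using Gau K Mi Gyd db by (intro assoc_mult_mat[symmetric]) auto
  also have "\<dots> = (((Gau * K) * Mi) * Gyd) * db"
    using Gau K Mi Gyd db by (intro assoc_mult_mat[symmetric]) auto
  finally have GU: "Gau * U = (Gau * K * Mi * Gyd) * db" .
  have dr: "dim_row Gyu = ny" using Gyu by simp
  have "Mhat Gad Gau Gyu Gyd K * db = Gad * db + (Gau * K * Mi * Gyd) * db"
    unfolding Mhat_def dr Mi_def[symmetric] using Gyu Gad Gau K Mi Gyd db
    by (intro add_mult_distrib_mat) auto
  then show ?thesis unfolding eA GU using Ga V Gad db Gau K Mi Gyd
    by (intro eq_matI) auto
qed



lemma hinf_le: assumes "hinf_norm A \<le> ereal b"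
  shows "stable_mat A \<and> (\<forall>\<omega>. opnorm (eval_mat A (\<i> * complex_of_real \<omega>)) \<le> b)"
proof (cases "stable_mat A")
  case True
  then have "(SUP \<omega>::real. ereal (opnorm (eval_mat A (\<i> * complex_of_real \<omega>)))) \<le> ereal b"
    using assms unfolding hinf_norm_def by simp
  then show ?thesis using True by (simp add: SUP_le_iff)
next
  case False
  then show ?thesis using assms unfolding hinf_norm_def by simp
qed

lemma le_hinf: assumes "stable_mat A" "\<And>\<omega>. opnorm (eval_mat A (\<i> * complex_of_real \<omega>)) \<le> b"
  shows "hinf_norm A \<le> ereal b"
  using assms unfolding hinf_norm_def by (simp add: SUP_le_iff)

theorem proposition4:
  fixes N :: nat
    and nv nd nu nw nz ny :: "nat \<Rightarrow> nat"
    and Gwv Gwd Gwu Gzv Gzd Gzu Gyv Gyd Gyu K :: "nat \<Rightarrow> tf mat"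
    and L :: "tf mat"
    and \<alpha> \<beta> :: "nat \<Rightarrow> real" and \<delta> :: real
    and V W Z Y U :: "nat \<Rightarrow> tf mat"
  assumes N: "N > 0"
    and dims: "\<And>i. i < N \<Longrightarrow>
        Gwv i \<in> carrier_mat (nw i) (nv i) \<and> Gwd i \<in> carrier_mat (nw i) (nd i) \<and>
        Gwu i \<in> carrier_mat (nw i) (nu i) \<and>
        Gzv i \<in> carrier_mat (nz i) (nv i) \<and> Gzd i \<in> carrier_mat (nz i) (nd i) \<and>
        Gzu i \<in> carrier_mat (nz i) (nu i) \<and>
        Gyv i \<in> carrier_mat (ny i) (nv i) \<and> Gyd i \<in> carrier_mat (ny i) (nd i) \<and>
        Gyu i \<in> carrier_mat (ny i) (nu i) \<and>
        K i \<in> carrier_mat (nu i) (ny i)"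
    and L_dim: "L \<in> carrier_mat (offset nv N) (offset nw N)"
    and G_proper: "\<And>i. i < N \<Longrightarrow>
        proper_mat (Gwv i) \<and> proper_mat (Gwd i) \<and> proper_mat (Gwu i) \<and>
        proper_mat (Gzv i) \<and> proper_mat (Gzd i) \<and> proper_mat (Gzu i) \<and>
        proper_mat (Gyv i) \<and> proper_mat (Gyd i) \<and> proper_mat (Gyu i)"
    and L_proper: "proper_mat L"
    and K_stab: "\<And>i. i < N \<Longrightarrow> stabilizing (K i) (Gyu i)"
    and pre_stable: "internally_stable_fb (diag_blocks Gwv N) L"
    and net_wp: "network_well_posed N nv nd nu nw nz ny Gwv Gwd Gwu Gzv Gzd Gzu Gyv Gyd Gyu K L"
    and delta_nonneg: "\<delta> \<ge> 0"
    and delta_bound: "hinf_norm (diag_blocks Gzv N *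
        minv (1\<^sub>m (offset nv N) - L * diag_blocks Gwv N) * L) \<le> ereal \<delta>"
    and alpha: "\<And>i. i < N \<Longrightarrow> hinf_norm (Mhat (Gzd i) (Gzu i) (Gyu i) (Gyd i) (K i)) \<le> ereal (\<alpha> i)"
    and beta: "\<And>i. i < N \<Longrightarrow> hinf_norm (Mhat (Gwd i) (Gwu i) (Gyu i) (Gyd i) (K i)) \<le> ereal (\<beta> i)"
    and sol: "network_solution N nv nd nu nw nz ny Gwv Gwd Gwu Gzv Gzd Gzu Gyv Gyd Gyu K L V W Z Y U"
  shows "hinf_norm (stack_rows (offset nd N) Z N)
           \<le> ereal (Max (\<alpha> ` {..<N}) + \<delta> * Max (\<beta> ` {..<N}))"
proof -
  define c where "c = offset nd N"
  have solI: "V i \<in> carrier_mat (nv i) c \<and> W i \<in> carrier_mat (nw i) c \<and>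
            Z i \<in> carrier_mat (nz i) c \<and> Y i \<in> carrier_mat (ny i) c \<and>
            U i \<in> carrier_mat (nu i) c \<and>
            W i = Gwv i * V i + Gwd i * d_block nd N i + Gwu i * U i \<and>
            Z i = Gzv i * V i + Gzd i * d_block nd N i + Gzu i * U i \<and>
            Y i = Gyv i * V i + Gyd i * d_block nd N i + Gyu i * U i \<and>
            U i = K i * Rmat (Gyv i) * (Y i @\<^sub>r V i)" if "i < N" for i
    using sol that unfolding network_solution_def Let_def c_def by blast
  have stVL: "stack_rows c V N = L * stack_rows c W N"
    using sol unfolding network_solution_def Let_def c_def by blast
  have Vc: "V i \<in> carrier_mat (nv i) c" and Wc: "W i \<in> carrier_mat (nw i) c"
    and Zc: "Z i \<in> carrier_mat (nz i) c" if "i < N" for i using solI[OF that] by blast+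
  have Gwvc: "Gwv i \<in> carrier_mat (nw i) (nv i)" and Gzvc: "Gzv i \<in> carrier_mat (nz i) (nv i)"
    if "i < N" for i using dims[OF that] by blast+
  have kt: "kertriv (1\<^sub>m (ny i) - Gyu i * K i) (ny i)" if i: "i < N" for i
  proof -
    have "invertible_mat (loop_mat (Gyu i) (K i))" using K_stab[OF i]
      unfolding stabilizing_def internally_stable_fb_def well_posed_fb_def by auto
    then show ?thesis using dims[OF i] by (intro loop_ker1) auto
  qed
  have db: "d_block nd N i \<in> carrier_mat (nd i) c" for i unfolding d_block_def c_def by auto
  define Mw where "Mw i = Mhat (Gwd i) (Gwu i) (Gyu i) (Gyd i) (K i)" for i
  define Mz where "Mz i = Mhat (Gzd i) (Gzu i) (Gyu i) (Gyd i) (K i)" for i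
  have minvc: "minv (1\<^sub>m (ny i) - Gyu i * K i) \<in> carrier_mat (ny i) (ny i)" if i: "i < N" for i
    using dims[OF i] kt[OF i] by (intro minv_props(3)) auto
  have Mwc: "Mw i \<in> carrier_mat (nw i) (nd i)" if i: "i < N" for i
    unfolding Mw_def using dims[OF i] minvc[OF i] by (intro Mhat_carrier) auto
  have Mzc: "Mz i \<in> carrier_mat (nz i) (nd i)" if i: "i < N" for i
    unfolding Mz_def using dims[OF i] minvc[OF i] by (intro Mhat_carrier) auto
  have Wi: "W i = Gwv i * V i + Mw i * d_block nd N i" if i: "i < N" for i
    unfolding Mw_def using dims[OF i] solI[OF i] kt[OF i] db[of i]
    by (intro local_eq[of _ "nw i" "nv i" _ "nd i" _ "nu i" _ "ny i"]) blast+
  have Zi: "Z i = Gzv i * V i + Mz i * d_block nd N i" if i: "i < N" for i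
    unfolding Mz_def using dims[OF i] solI[OF i] kt[OF i] db[of i]
    by (intro local_eq[of _ "nz i" "nv i" _ "nd i" _ "nu i" _ "ny i"]) blast+
  define Xw where "Xw = diag_blocks Gwv N"
  define Zd where "Zd = diag_blocks Gzv N"
  define Mwd where "Mwd = diag_blocks Mw N"
  define Mzd where "Mzd = diag_blocks Mz N"
  define SV where "SV = stack_rows c V N"
  define SW where "SW = stack_rows c W N"
  define SZ where "SZ = stack_rows c Z N"
  have Xwc: "Xw \<in> carrier_mat (offset nw N) (offset nv N)" unfolding Xw_def
    using dims by (intro diag_blocks_carrier) blast
  have Zdc: "Zd \<in> carrier_mat (offset nz N) (offset nv N)" unfolding Zd_def
    using dims by (intro diag_blocks_carrier) blast
  have Mwdc: "Mwd \<in> carrier_mat (offset nw N) c" unfolding Mwd_def c_def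
    using Mwc by (intro diag_blocks_carrier) blast
  have Mzdc: "Mzd \<in> carrier_mat (offset nz N) c" unfolding Mzd_def c_def
    using Mzc by (intro diag_blocks_carrier) blast
  have SVc: "SV \<in> carrier_mat (offset nv N) c" unfolding SV_def using Vc Wc by (intro stack_carrier) auto
  have SWc: "SW \<in> carrier_mat (offset nw N) c" unfolding SW_def using Vc Wc by (intro stack_carrier) auto
  have SD: "stack_rows c (d_block nd N) N = 1\<^sub>m c" unfolding c_def by (rule stack_dblock_N)
  have SWe: "SW = Xw * SV + Mwd"
  proof -
    have "SW = stack_rows c (\<lambda>i. Gwv i * V i + Mw i * d_block nd N i) N"
      unfolding SW_def using Wi by (rule stack_cong)
    also have "\<dots> = stack_rows c (\<lambda>i. Gwv i * V i) N + stack_rows c (\<lambda>i. Mw i * d_block nd N i) N"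
      using Gwvc Vc Mwc db by (intro stack_add[where r = nw]) (auto simp del: mult_carrier_mat intro!: mult_carrier_mat)
    also have "stack_rows c (\<lambda>i. Gwv i * V i) N = Xw * SV"
      unfolding Xw_def SV_def using Gwvc Vc by (intro stack_mult[where r = nw and m = nv]) auto
    also have "stack_rows c (\<lambda>i. Mw i * d_block nd N i) N = Mwd * 1\<^sub>m c"
      unfolding Mwd_def SD[symmetric] using Mwc db by (intro stack_mult[where r = nw and m = nd]) auto
    also have "Mwd * 1\<^sub>m c = Mwd" using Mwdc by simp
    finally show ?thesis .
  qed
  have SZe: "SZ = Zd * SV + Mzd"
  proof -
    have "SZ = stack_rows c (\<lambda>i. Gzv i * V i + Mz i * d_block nd N i) N"
      unfolding SZ_def using Zi by (rule stack_cong)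
    also have "\<dots> = stack_rows c (\<lambda>i. Gzv i * V i) N + stack_rows c (\<lambda>i. Mz i * d_block nd N i) N"
      using Gzvc Vc Mzc db by (intro stack_add[where r = nz]) (auto simp del: mult_carrier_mat intro!: mult_carrier_mat)
    also have "stack_rows c (\<lambda>i. Gzv i * V i) N = Zd * SV"
      unfolding Zd_def SV_def using Gzvc Vc by (intro stack_mult[where r = nz and m = nv]) auto
    also have "stack_rows c (\<lambda>i. Mz i * d_block nd N i) N = Mzd * 1\<^sub>m c"
      unfolding Mzd_def SD[symmetric] using Mzc db by (intro stack_mult[where r = nz and m = nd]) auto
    also have "Mzd * 1\<^sub>m c = Mzd" using Mzdc by simp
    finally show ?thesis .
  qed
  have ktL: "kertriv (1\<^sub>m (offset nv N) - L * Xw) (offset nv N)"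
  proof -
    have "invertible_mat (loop_mat Xw L)" using pre_stable
      unfolding Xw_def internally_stable_fb_def well_posed_fb_def by auto
    then show ?thesis using Xwc L_dim by (intro loop_ker2) auto
  qed
  define Mi where "Mi = minv (1\<^sub>m (offset nv N) - L * Xw)"
  have Mic: "Mi \<in> carrier_mat (offset nv N) (offset nv N)" unfolding Mi_def using Xwc L_dim ktL
    by (intro minv_props(3)) auto
  have "SV = (L * Xw) * SV + L * Mwd"
  proof -
    have "SV = L * SW" using stVL unfolding SV_def SW_def .
    also have "\<dots> = L * (Xw * SV) + L * Mwd" unfolding SWe using L_dim Xwc SVc Mwdc
      by (intro mult_add_distrib_mat) auto
    also have "L * (Xw * SV) = (L * Xw) * SV" using L_dim Xwc SVc by (intro assoc_mult_mat[symmetric]) auto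
    finally show ?thesis .
  qed
  then have SVe: "SV = Mi * (L * Mwd)" unfolding Mi_def
    by (intro solve_lin[OF _ SVc _ _ ktL]) (use L_dim Xwc Mwdc in auto)
  define PP where "PP = diag_blocks Gzv N * minv (1\<^sub>m (offset nv N) - L * diag_blocks Gwv N) * L"
  have PPe: "PP = Zd * Mi * L" unfolding PP_def Zd_def Mi_def Xw_def ..
  have PPc: "PP \<in> carrier_mat (offset nz N) (offset nw N)" unfolding PPe using Zdc Mic L_dim by auto
  have Te: "stack_rows (offset nd N) Z N = PP * Mwd + Mzd"
  proof -
    have "stack_rows (offset nd N) Z N = Zd * (Mi * (L * Mwd)) + Mzd" using SZe SVe unfolding SZ_def c_def by simp
    also have "Zd * (Mi * (L * Mwd)) = PP * Mwd"
    proof -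
      have "Mi * (L * Mwd) = (Mi * L) * Mwd" using Mic L_dim Mwdc by (intro assoc_mult_mat[symmetric]) auto
      then have "Zd * (Mi * (L * Mwd)) = Zd * ((Mi * L) * Mwd)" by simp
      also have "\<dots> = (Zd * (Mi * L)) * Mwd" using Zdc Mic L_dim Mwdc by (intro assoc_mult_mat[symmetric]) auto
      also have "Zd * (Mi * L) = Zd * Mi * L" using Zdc Mic L_dim by (intro assoc_mult_mat[symmetric]) auto
      finally show ?thesis unfolding PPe .
    qed
    finally show ?thesis .
  qed
  have PPs: "stable_mat PP" and PPb: "\<And>\<omega>. opnorm (eval_mat PP (\<i> * complex_of_real \<omega>)) \<le> \<delta>"
    using hinf_le[OF delta_bound[folded PP_def]] by auto
  have Mzs: "stable_mat (Mz i)" and Mzb: "\<And>\<omega>. opnorm (eval_mat (Mz i) (\<i> * complex_of_real \<omega>)) \<le> \<alpha> i"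
    if i: "i < N" for i using hinf_le[OF alpha[OF i, folded Mz_def]] by auto
  have Mws: "stable_mat (Mw i)" and Mwb: "\<And>\<omega>. opnorm (eval_mat (Mw i) (\<i> * complex_of_real \<omega>)) \<le> \<beta> i"
    if i: "i < N" for i using hinf_le[OF beta[OF i, folded Mw_def]] by auto
  define A where "A = Max (\<alpha> ` {..<N})"
  define B where "B = Max (\<beta> ` {..<N})"
  have aA: "\<alpha> i \<le> A" if "i < N" for i unfolding A_def using that by (intro Max_ge) auto
  have bB: "\<beta> i \<le> B" if "i < N" for i unfolding B_def using that by (intro Max_ge) auto
  have A0: "0 \<le> A" using aA[OF N] Mzb[OF N, of 0] opnorm_nonneg[of "eval_mat (Mz 0) (\<i> * complex_of_real 0)"] by linarith
  have B0: "0 \<le> B" using bB[OF N] Mwb[OF N, of 0] opnorm_nonneg[of "eval_mat (Mw 0) (\<i> * complex_of_real 0)"] by linarith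
  have Mwds: "stable_mat Mwd" unfolding Mwd_def using Mws by (intro stable_diag_blocks) auto
  have Mzds: "stable_mat Mzd" unfolding Mzd_def using Mzs by (intro stable_diag_blocks) auto
  have Ts: "stable_mat (PP * Mwd + Mzd)"
    using PPs Mwds Mzds PPc Mwdc Mzdc by (intro stable_add stable_mult) auto
  show ?thesis unfolding Te A_def[symmetric] B_def[symmetric]
  proof (rule le_hinf[OF Ts])
    fix \<omega> :: real
    define s where "s = \<i> * complex_of_real \<omega>"
    have Re: "0 \<le> Re s" unfolding s_def by simp
    have "eval_mat (PP * Mwd + Mzd) s = eval_mat PP s * eval_mat Mwd s + eval_mat Mzd s"
      using PPs Mwds Mzds PPc Mwdc Mzdc Re
      by (simp add: eval_mat_add stable_mult eval_mat_mult)
    also have "opnorm \<dots> \<le> opnorm (eval_mat PP s * eval_mat Mwd s) + opnorm (eval_mat Mzd s)"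
      using PPc Mwdc Mzdc by (intro opnorm_add) auto
    also have "\<dots> \<le> opnorm (eval_mat PP s) * opnorm (eval_mat Mwd s) + A"
    proof (rule add_mono)
      show "opnorm (eval_mat PP s * eval_mat Mwd s) \<le> opnorm (eval_mat PP s) * opnorm (eval_mat Mwd s)"
        using PPc Mwdc by (intro opnorm_mult) auto
      show "opnorm (eval_mat Mzd s) \<le> A" unfolding Mzd_def s_def using A0
        by (intro opnorm_eval_diag) (auto intro: order_trans[OF Mzb aA])
    qed
    also have "\<dots> \<le> \<delta> * B + A"
    proof -
      have "opnorm (eval_mat Mwd s) \<le> B" unfolding Mwd_def s_def using B0
        by (intro opnorm_eval_diag) (auto intro: order_trans[OF Mwb bB])
      then have "opnorm (eval_mat PP s) * opnorm (eval_mat Mwd s) \<le> \<delta> * B"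
        using PPb[of \<omega>] delta_nonneg opnorm_nonneg unfolding s_def
        by (intro mult_mono) auto
      then show ?thesis by simp
    qed
    finally show "opnorm (eval_mat (PP * Mwd + Mzd) (\<i> * complex_of_real \<omega>)) \<le> A + \<delta> * B"
      unfolding s_def by simp
  qed
qed


end
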